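(* Let $\mathfrak a\subset K$ be a fractional $A_{\infty_1}$-ideal having an $\mathbb F_q$-basis $(\alpha_0=1,\alpha_1,\alpha_2,\dots)$ with $1<|\alpha_1|<|\alpha_2|<\cdots$. For $i\ge1$ and $m\in\mathbb N$ set \[\Omega_i^{\mathfrak a}(m)=\sum_{(c_0,\dots,c_{i-1})\in\mathbb F_q^i}\big(c_0+c_1\alpha_1+\dots+c_{i-1}\alpha_{i-1}+\alpha_i\big)^{-m}.\] Then for every $n\in\mathbb N$, $n\ge1$: (1) $\displaystyle\Omega_1^{\mathfrak a}(q^n-1)=\frac{\alpha_1^{q^n}-\alpha_1}{\prod_{c\in\mathbb F_q}(c+\alpha_1^{q^n})}$ and $|\Omega_1^{\mathfrak a}(q^n-1)|=|\alpha_1|^{q^n(1-q)}$; (2) for all $i\ge1$, $|\Omega_i^{\mathfrak a}(q^n-1)|\le|\alpha_i|^{q^n(1-q)}$.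
   Context: Let $q$ be a prime power, $k=\mathbb F_q(T)$, $A=\mathbb F_q[T]$, $k_\infty=\mathbb F_q((1/T))$ with $|x|=q^{\deg_T x}$. Let $f\in k_\infty\setminus k$ be a root of $X^2-aX-b$ with $a\in A$ monic, $d=\deg_T a\ge1$, $b\in\mathbb F_q^*$, $|f|=q^d$. Let $K=k(f)\subset k_\infty$ (absolute values of elements of $K$ are computed in $k_\infty$), and $A_{\infty_1}=\mathbb F_q[f,fT,\dots,fT^{d-1}]$ the ring of elements of $K$ regular away from the place induced by $K\subset k_\infty$. *)

theory Defs
  imports "HOL-Computational_Algebra.Formal_Laurent_Series" "HOL-Library.FuncSet" "HOL-Library.Cardinality"
begin

text \<open>k_infinity = F_q((1/T)) is modelled as the type of formal Laurent series
  'a fls in the variable X = 1/T over a finite field 'a = F_q; hence T = fls_X_inv.\<close>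

definition Tvar :: "'a::field fls" where
  "Tvar = fls_X_inv"

text \<open>|x| = q^(deg_T x) = q^(- v_{1/T}(x)), and |0| = 0.\<close>
definition absinf :: "'a::{finite,field} fls \<Rightarrow> real" where
  "absinf x = (if x = 0 then 0 else real CARD('a) powi (- fls_subdegree x))"

definition Tpoly :: "'a::field poly \<Rightarrow> 'a fls" where
  "Tpoly p = (\<Sum>i\<le>degree p. fls_const (coeff p i) * Tvar ^ i)"

definition Aring :: "'a::field fls set" where
  "Aring = range Tpoly"

definition kfield :: "'a::field fls set" where
  "kfield = {u / v | u v. u \<in> Aring \<and> v \<in> Aring \<and> v \<noteq> 0}"

definition Kfield :: "'a::field fls \<Rightarrow> 'a fls set" where
  "Kfield f = {u + v * f | u v. u \<in> kfield \<and> v \<in> kfield}"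

inductive_set Ainf1 :: "'a::field fls \<Rightarrow> nat \<Rightarrow> 'a fls set" for f d where
  const: "fls_const c \<in> Ainf1 f d"
| gen: "j < d \<Longrightarrow> f * Tvar ^ j \<in> Ainf1 f d"
| add: "x \<in> Ainf1 f d \<Longrightarrow> y \<in> Ainf1 f d \<Longrightarrow> x + y \<in> Ainf1 f d"
| mult: "x \<in> Ainf1 f d \<Longrightarrow> y \<in> Ainf1 f d \<Longrightarrow> x * y \<in> Ainf1 f d"

definition frac_ideal :: "'a::field set \<Rightarrow> 'a set \<Rightarrow> 'a set \<Rightarrow> bool" where
  "frac_ideal R K I \<longleftrightarrow> I \<subseteq> K \<and> 0 \<in> I \<and> (\<exists>x\<in>I. x \<noteq> 0) \<and>
     (\<forall>x\<in>I. \<forall>y\<in>I. x + y \<in> I) \<and> (\<forall>r\<in>R. \<forall>x\<in>I. r * x \<in> I) \<and>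
     (\<exists>c\<in>R. c \<noteq> 0 \<and> (\<forall>x\<in>I. c * x \<in> R))"

definition Fq_basis :: "(nat \<Rightarrow> 'a::field fls) \<Rightarrow> 'a fls set \<Rightarrow> bool" where
  "Fq_basis \<alpha> I \<longleftrightarrow> (\<forall>i. \<alpha> i \<in> I) \<and>
     (\<forall>x\<in>I. \<exists>!c::nat \<Rightarrow> 'a. finite {i. c i \<noteq> 0} \<and>
        x = (\<Sum>i\<in>{i. c i \<noteq> 0}. fls_const (c i) * \<alpha> i))"

definition Omega :: "(nat \<Rightarrow> 'a::{finite,field} fls) \<Rightarrow> nat \<Rightarrow> nat \<Rightarrow> 'a fls" where
  "Omega \<alpha> i m = (\<Sum>c\<in>({..<i} \<rightarrow>\<^sub>E (UNIV::'a set)).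
      inverse ((\<Sum>j<i. fls_const (c j) * \<alpha> j) + \<alpha> i) ^ m)"

end

theory Submission
  imports Defs
begin

lemma card_ge2: "CARD('a::{finite,field}) \<ge> 2"
proof -
  have "card {0::'a, 1} \<le> CARD('a)" by (rule card_mono) auto
  thus ?thesis by simp
qed

lemma fermat_ff:
  fixes x :: "'a :: {finite,field}"
  shows   "x ^ CARD('a) = x"
proof (cases "x = 0")
  case False
  have "x * (\<Prod>y\<in>UNIV-{0}. x * y) = x * x ^ (card (UNIV :: 'a set) - 1) * \<Prod>(UNIV-{0})"
    by (simp add: prod.distrib mult_ac)
  also have "x * x ^ (card (UNIV :: 'a set) - 1) = x ^ Suc (card (UNIV :: 'a set) - 1)"
    by (subst power_Suc) auto
  also have "Suc (card (UNIV :: 'a set) - 1) = card (UNIV :: 'a set)"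
    using finite_UNIV_card_ge_0[where ?'a = 'a] by simp
  also have "(\<Prod>y\<in>UNIV-{0}. x * y) = (\<Prod>y\<in>UNIV-{0}. y)"
    by (rule prod.reindex_bij_witness[of _ "\<lambda>y. y / x" "\<lambda>y. x * y"]) (use False in auto)
  finally show ?thesis
    by simp
qed (use finite_UNIV_card_ge_0[where ?'a = 'a] in auto)

lemma of_nat_card_0: "(of_nat CARD('a) :: 'a::{finite,field}) = 0"
proof -
  have "(\<Sum>c\<in>(UNIV::'a set). c + 1) = (\<Sum>c\<in>UNIV. c)"
    by (rule sum.reindex_bij_witness[of _ "\<lambda>c. c - 1" "\<lambda>c. c + 1"]) auto
  thus ?thesis by (simp add: sum.distrib)
qed

lemma of_nat_card_fls: "(of_nat CARD('a) :: 'a::{finite,field} fls) = 0"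
  by (simp add: fls_of_nat of_nat_card_0)

abbreviation Pq :: "'a::{finite,field} fls poly" where
  "Pq \<equiv> (\<Prod>c\<in>UNIV. [:fls_const c, 1:])"

lemma fls_const_inj: "inj (fls_const :: 'a::field \<Rightarrow> 'a fls)"
proof (rule injI)
  fix x y :: 'a assume "fls_const x = fls_const y"
  hence "fls_nth (fls_const x) 0 = fls_nth (fls_const y) 0" by simp
  thus "x = y" by simp
qed

lemma Pq_eq: "(Pq :: 'a::{finite,field} fls poly) = monom 1 CARD('a) - [:0,1:]"
proof -
  define q where "q = CARD('a)"
  have q2: "q \<ge> 2" using card_ge2[where 'a='a] q_def by simp
  define D :: "'a fls poly" where "D = Pq - monom 1 q + [:0,1:]"
  have degP: "degree (Pq :: 'a fls poly) = q"
    by (subst degree_prod_sum_eq) (auto simp: q_def)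
  have lcP: "lead_coeff (Pq :: 'a fls poly) = 1"
    by (simp add: lead_coeff_prod)
  have cD: "coeff D q = 0" using degP lcP q2 by (simp add: D_def coeff_monom coeff_eq_0)
  have dD: "degree D \<le> q"
    unfolding D_def using degP q2
    by (intro degree_add_le degree_diff_le) (auto simp: degree_monom_le intro: order.trans[OF degree_monom_le])
  have dD': "degree D < q"
  proof (cases "D = 0")
    case True thus ?thesis using q2 by simp
  next
    case False
    hence "coeff D (degree D) \<noteq> 0" by simp
    with cD have "degree D \<noteq> q" by auto
    with dD show ?thesis by simp
  qed
  have roots: "poly D x = 0" if "x \<in> range fls_const" for x
  proof -
    from that obtain c where x: "x = fls_const c" by auto
    have "poly Pq x = 0"
      unfolding poly_prod x
      by (subst prod_zero_iff) (auto simp: fls_plus_const intro: exI[where x="-c"])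
    moreover have "x ^ q = x" unfolding x q_def
      by (simp add: fermat_ff flip: fls_const_power)
    ultimately show ?thesis by (simp add: D_def poly_monom)
  qed
  have cardA: "card (range (fls_const :: 'a \<Rightarrow> 'a fls)) = q"
    using card_image[OF fls_const_inj] q_def by simp
  have "D = 0"
    by (rule poly_eqI_degree[where A="range fls_const"]) (use dD' cardA roots in auto)
  thus ?thesis unfolding D_def q_def by (simp add: algebra_simps)
qed

lemma poly_Pq: "poly (Pq :: 'a::{finite,field} fls poly) w = w ^ CARD('a) - w"
  by (simp add: Pq_eq poly_monom)

lemma poly_Pq': "poly (Pq :: 'a::{finite,field} fls poly) w = (\<Prod>c\<in>UNIV. fls_const c + w)"
  by (simp add: poly_prod)

lemma frob1:
  fixes z :: "'a::{finite,field} fls"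
  shows "(z + fls_const c) ^ CARD('a) = z ^ CARD('a) + fls_const c"
proof -
  have "(\<Prod>d\<in>UNIV. fls_const d + (z + fls_const c)) = (\<Prod>d\<in>UNIV. fls_const d + z)"
    by (rule prod.reindex_bij_witness[of _ "\<lambda>d. d - c" "\<lambda>d. d + c"])
       (auto simp: fls_plus_const algebra_simps)
  hence "(z + fls_const c) ^ CARD('a) - (z + fls_const c) = z ^ CARD('a) - z"
    by (simp only: poly_Pq' flip: poly_Pq)
  thus ?thesis by (simp add: algebra_simps)
qed

lemma frobn:
  fixes z :: "'a::{finite,field} fls"
  shows "(z + fls_const c) ^ (CARD('a) ^ n) = z ^ (CARD('a) ^ n) + fls_const c"
proof (induction n)
  case 0 thus ?case by simp
next
  case (Suc n)
  have "(z + fls_const c) ^ (CARD('a) ^ Suc n) = ((z + fls_const c) ^ (CARD('a) ^ n)) ^ CARD('a)"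
    by (simp only: power_Suc2 power_mult)
  also have "\<dots> = (z ^ (CARD('a) ^ n) + fls_const c) ^ CARD('a)" by (simp add: Suc)
  also have "\<dots> = (z ^ (CARD('a) ^ n)) ^ CARD('a) + fls_const c" by (rule frob1)
  also have "(z ^ (CARD('a) ^ n)) ^ CARD('a) = z ^ (CARD('a) ^ Suc n)"
    by (simp only: power_Suc2 power_mult)
  finally show ?case .
qed

lemma deriv_sum:
  fixes y :: "'a::{finite,field} fls"
  shows "(\<Sum>c\<in>UNIV. \<Prod>d\<in>UNIV-{c}. fls_const d + y) = -1"
proof -
  have q2: "CARD('a) \<ge> 2" by (rule card_ge2)
  have "pderiv (Pq :: 'a fls poly) = (\<Sum>c\<in>UNIV. \<Prod>d\<in>UNIV-{c}. [:fls_const d, 1:])"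
    by (simp add: pderiv_prod pderiv_pCons)
  moreover have "pderiv (Pq :: 'a fls poly) = -1"
    using q2 by (simp add: Pq_eq pderiv_diff pderiv_monom of_nat_card_fls pderiv_pCons one_pCons)
  ultimately have "poly (\<Sum>c\<in>UNIV. \<Prod>d\<in>UNIV-{c}. [:fls_const d, 1:]) y = -1"
    by (metis poly_1 poly_minus)
  thus ?thesis by (simp add: poly_sum poly_prod)
qed

lemma inv_sum:
  fixes y :: "'a::{finite,field} fls"
  assumes nz: "\<And>c. fls_const c + y \<noteq> 0"
  shows "(\<Sum>c\<in>UNIV. inverse (fls_const c + y)) = - 1 / (\<Prod>c\<in>UNIV. fls_const c + y)"
proof -
  have P: "(\<Prod>c\<in>UNIV. fls_const c + y) \<noteq> 0" using nz by simp
  have "inverse (fls_const c + y) = (\<Prod>d\<in>UNIV-{c}. fls_const d + y) / (\<Prod>c\<in>UNIV. fls_const c + y)" for c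
  proof -
    have "(\<Prod>c\<in>UNIV. fls_const c + y) = (fls_const c + y) * (\<Prod>d\<in>UNIV-{c}. fls_const d + y)"
      by (rule prod.remove) auto
    thus ?thesis using nz[of c] P by (simp add: field_simps)
  qed
  hence "(\<Sum>c\<in>UNIV. inverse (fls_const c + y)) = (\<Sum>c\<in>UNIV. \<Prod>d\<in>UNIV-{c}. fls_const d + y) / (\<Prod>c\<in>UNIV. fls_const c + y)"
    by (simp add: sum_divide_distrib)
  thus ?thesis by (simp add: deriv_sum)
qed

lemma G_eq:
  fixes z :: "'a::{finite,field} fls"
  assumes nz: "\<And>c. fls_const c + z \<noteq> 0"
  shows "(\<Sum>c\<in>UNIV. inverse (fls_const c + z) ^ (CARD('a) ^ n - 1)) =
         (z ^ (CARD('a) ^ n) - z) / (\<Prod>c\<in>UNIV. fls_const c + z ^ (CARD('a) ^ n))"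
proof -
  define N where "N = CARD('a) ^ n"
  define y where "y = z ^ N"
  have N1: "N \<ge> 1" unfolding N_def by simp
  have fr: "fls_const c + y = (fls_const c + z) ^ N" for c
    using frobn[of z c n] unfolding N_def y_def by (simp add: add.commute)
  have nzy: "fls_const c + y \<noteq> 0" for c using nz[of c] fr[of c] by simp
  have trm: "inverse (fls_const c + z) ^ (N - 1) = 1 + (z - y) * inverse (fls_const c + y)" for c
  proof -
    obtain k where k: "N = Suc k" using N1 by (cases N) auto
    have "inverse (fls_const c + z) ^ (N - 1) = (fls_const c + z) * inverse ((fls_const c + z) ^ N)"
      using nz[of c] unfolding k by (simp add: power_inverse)
    also have "\<dots> = (fls_const c + z) / (fls_const c + y)" by (simp add: fr divide_inverse)
    also have "\<dots> = 1 + (z - y) / (fls_const c + y)" using nzy[of c] by (simp add: field_simps)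
    finally show ?thesis by (simp add: divide_inverse)
  qed
  have "(\<Sum>c\<in>UNIV. inverse (fls_const c + z) ^ (N - 1)) =
        of_nat CARD('a) + (z - y) * (\<Sum>c\<in>UNIV. inverse (fls_const c + y))"
    unfolding trm by (simp add: sum.distrib sum_distrib_left)
  also have "\<dots> = (z - y) * (- 1 / (\<Prod>c\<in>UNIV. fls_const c + y))"
    by (simp add: of_nat_card_fls inv_sum nzy)
  also have "\<dots> = (y - z) / (\<Prod>c\<in>UNIV. fls_const c + y)"
    by (metis minus_diff_eq minus_divide_left mult_minus1_right times_divide_eq_right)
  finally show ?thesis unfolding N_def y_def .
qed

lemma sd_prod:
  fixes F :: "'b \<Rightarrow> 'a::field fls"
  assumes "\<And>x. x \<in> I \<Longrightarrow> F x \<noteq> 0"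
  shows "fls_subdegree (\<Prod>x\<in>I. F x) = (\<Sum>x\<in>I. fls_subdegree (F x))"
  using assms by (induction I rule: infinite_finite_induct) auto

lemma sd_add_const:
  fixes y :: "'a::field fls"
  assumes "fls_subdegree y < 0"
  shows "fls_subdegree (fls_const c + y) = fls_subdegree y" "fls_const c + y \<noteq> 0"
proof -
  have y0: "y \<noteq> 0" using assms by auto
  show *: "fls_subdegree (fls_const c + y) = fls_subdegree y"
    by (rule fls_subdegree_add_eq2) (use y0 assms in auto)
  show "fls_const c + y \<noteq> 0" using * assms by auto
qed

lemma absinf_eq: "x \<noteq> 0 \<Longrightarrow> absinf (x :: 'a::{finite,field} fls) = real CARD('a) powr real_of_int (- fls_subdegree x)"
  using powr_real_of_int'[of "real CARD('a)" "- fls_subdegree x"] by (simp add: absinf_def)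

lemma G_sd:
  fixes z :: "'a::{finite,field} fls"
  assumes sz: "fls_subdegree z < 0" and n1: "n \<ge> 1"
  defines "G \<equiv> (z ^ (CARD('a) ^ n) - z) / (\<Prod>c\<in>UNIV. fls_const c + z ^ (CARD('a) ^ n))"
  shows "G \<noteq> 0 \<and> fls_subdegree G = int CARD('a) ^ n * fls_subdegree z * (1 - int CARD('a))"
proof -
  define N where "N = CARD('a) ^ n"
  define y where "y = z ^ N"
  have q2: "CARD('a) \<ge> 2" by (rule card_ge2)
  have N2: "N \<ge> 2" unfolding N_def using q2 n1
    by (metis less_one not_le one_le_numeral order.trans power_increasing power_one_right)
  have z0: "z \<noteq> 0" using sz by auto
  have y0: "y \<noteq> 0" using z0 unfolding y_def by simp
  have sy: "fls_subdegree y = int N * fls_subdegree z" unfolding y_def by (simp add: fls_subdegree_pow)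
  have syz: "fls_subdegree y < fls_subdegree z" using sy N2 sz
  proof -
    have "int N * fls_subdegree z \<le> 2 * fls_subdegree z"
      using N2 sz by (intro mult_right_mono_neg) auto
    thus ?thesis using sy sz by linarith
  qed
  have sdiff: "fls_subdegree (y - z) = fls_subdegree y" by (rule fls_subdegree_diff_eq1) (use y0 syz in auto)
  have diff0: "y - z \<noteq> 0"
  proof
    assume "y - z = 0" hence "y = z" by simp
    with syz show False by simp
  qed
  have syneg: "fls_subdegree y < 0" using syz sz by simp
  have P: "(\<Prod>c\<in>UNIV. fls_const c + y) \<noteq> 0" using sd_add_const(2)[OF syneg] by simp
  have sP: "fls_subdegree (\<Prod>c\<in>UNIV. fls_const c + y) = int CARD('a) * fls_subdegree y"
    by (subst sd_prod) (auto simp: sd_add_const[OF syneg])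
  have "G = (y - z) / (\<Prod>c\<in>UNIV. fls_const c + y)" unfolding G_def y_def N_def ..
  hence "G \<noteq> 0" and "fls_subdegree G = fls_subdegree y - int CARD('a) * fls_subdegree y"
    using diff0 P by (auto simp: fls_divide_subdegree sdiff sP)
  thus ?thesis unfolding sy N_def by (simp add: algebra_simps)
qed

lemma absinf_G:
  fixes z :: "'a::{finite,field} fls"
  assumes sz: "fls_subdegree z < 0" and n1: "n \<ge> 1"
  shows "absinf ((z ^ (CARD('a) ^ n) - z) / (\<Prod>c\<in>UNIV. fls_const c + z ^ (CARD('a) ^ n)))
     = absinf z powr (real CARD('a) ^ n * (1 - real CARD('a)))"
proof -
  have z0: "z \<noteq> 0" using sz by auto
  have q0: "real CARD('a) > 0" by simp
  define G where "G = (z ^ (CARD('a) ^ n) - z) / (\<Prod>c\<in>UNIV. fls_const c + z ^ (CARD('a) ^ n))"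
  note GG = G_sd[OF sz n1, folded G_def]
  have "absinf G = real CARD('a) powr real_of_int (- fls_subdegree G)"
    using GG by (simp add: absinf_eq)
  also have "real_of_int (- fls_subdegree G) = real_of_int (- fls_subdegree z) * (real CARD('a) ^ n * (1 - real CARD('a)))"
    using GG by simp
  also have "real CARD('a) powr (real_of_int (- fls_subdegree z) * (real CARD('a) ^ n * (1 - real CARD('a))))
     = absinf z powr (real CARD('a) ^ n * (1 - real CARD('a)))"
    by (simp add: absinf_eq z0 powr_powr)
  finally show ?thesis unfolding G_def .
qed

lemma q_gt1: "real CARD('a::{finite,field}) > 1"
  using card_ge2[where 'a='a] by simp

lemma absinf_less_sd:
  fixes x y :: "'a::{finite,field} fls"
  assumes "x \<noteq> 0" "y \<noteq> 0" "absinf x < absinf y"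
  shows "fls_subdegree y < fls_subdegree x"
  using assms q_gt1[where 'a='a] by (simp add: absinf_eq powr_less_cancel_iff)

lemma absinf_sd_eq:
  fixes x y :: "'a::{finite,field} fls"
  assumes "x \<noteq> 0" "y \<noteq> 0" "absinf x = absinf y"
  shows "fls_subdegree y = fls_subdegree x"
  using assms q_gt1[where 'a='a] by (simp add: absinf_eq powr_inj)

lemma absinf_gt1:
  fixes x :: "'a::{finite,field} fls"
  assumes "absinf x > 1"
  shows "x \<noteq> 0 \<and> fls_subdegree x < 0"
proof -
  have x0: "x \<noteq> 0" using assms by (auto simp: absinf_def)
  have "absinf (1::'a fls) < absinf x" using assms by (simp add: absinf_def)
  from absinf_less_sd[OF _ x0 this] x0 show ?thesis by simp
qed

lemma sd_add_small:
  fixes w y :: "'a::field fls"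
  assumes y0: "y \<noteq> 0" and w: "\<And>k. k \<le> fls_subdegree y \<Longrightarrow> fls_nth w k = 0"
  shows "fls_subdegree (w + y) = fls_subdegree y \<and> w + y \<noteq> 0"
proof -
  have *: "fls_subdegree (w + y) = fls_subdegree y"
    by (rule fls_subdegree_eqI) (use w y0 nth_fls_subdegree_nonzero[OF y0] in auto)
  have c: "fls_nth (w + y) (fls_subdegree y) \<noteq> 0" using w y0 nth_fls_subdegree_nonzero[OF y0] by auto
  have "w + y \<noteq> 0" by (metis c fls_zero_nth)
  with * show ?thesis by simp
qed

lemma ultra:
  fixes F :: "'b \<Rightarrow> 'a::{finite,field} fls"
  assumes fin: "finite A" and B: "B \<ge> 0" and F: "\<And>a. a \<in> A \<Longrightarrow> F a \<noteq> 0 \<and> absinf (F a) = B"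
  shows "absinf (\<Sum>a\<in>A. F a) \<le> B"
proof (cases "A = {}")
  case True thus ?thesis using B by (simp add: absinf_def)
next
  case False
  then obtain a0 where a0: "a0 \<in> A" by auto
  define s where "s = fls_subdegree (F a0)"
  have sd: "fls_subdegree (F a) = s" if "a \<in> A" for a
    unfolding s_def by (rule absinf_sd_eq) (use F that a0 in auto)
  have coef: "fls_nth (\<Sum>a\<in>A. F a) k = 0" if "k < s" for k
    unfolding fls_nth_sum using sd that by (auto intro!: sum.neutral)
  show ?thesis
  proof (cases "(\<Sum>a\<in>A. F a) = 0")
    case True thus ?thesis using B by (simp add: absinf_def)
  next
    case False
    have "s \<le> fls_subdegree (\<Sum>a\<in>A. F a)" by (rule fls_subdegree_geI[OF False coef])
    hence "real CARD('a) powr real_of_int (- fls_subdegree (\<Sum>a\<in>A. F a)) \<le> real CARD('a) powr real_of_int (- s)"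
      using q_gt1[where 'a='a] by (intro powr_mono) auto
    moreover have "absinf (\<Sum>a\<in>A. F a) = real CARD('a) powr real_of_int (- fls_subdegree (\<Sum>a\<in>A. F a))"
      by (rule absinf_eq[OF False])
    moreover have "absinf (F a0) = real CARD('a) powr real_of_int (- s)"
      unfolding s_def by (rule absinf_eq) (use F[OF a0] in auto)
    ultimately have "absinf (\<Sum>a\<in>A. F a) \<le> absinf (F a0)" by simp
    thus ?thesis using F[OF a0] by simp
  qed
qed

lemma Omega_split:
  fixes \<alpha> :: "nat \<Rightarrow> 'a::{finite,field} fls"
  assumes i1: "i \<ge> 1"
  shows "Omega \<alpha> i m = (\<Sum>g\<in>({1..<i} \<rightarrow>\<^sub>E (UNIV::'a set)). \<Sum>a\<in>UNIV.
            inverse ((fls_const a * \<alpha> 0 + (\<Sum>j\<in>{1..<i}. fls_const (g j) * \<alpha> j)) + \<alpha> i) ^ m)"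
proof -
  have I: "{..<i} = insert 0 {1..<i}" using i1 by auto
  define h where "h = (\<lambda>c. inverse ((\<Sum>j<i. fls_const (c j) * \<alpha> j) + \<alpha> i) ^ m)"
  have "Omega \<alpha> i m = sum h ({..<i} \<rightarrow>\<^sub>E (UNIV::'a set))"
    unfolding Omega_def h_def ..
  also have "\<dots> = sum h ((\<lambda>(y, g). g(0 := y)) ` (UNIV \<times> ({1..<i} \<rightarrow>\<^sub>E (UNIV::'a set))))"
    unfolding I PiE_insert_eq by simp
  also have "\<dots> = (\<Sum>(a,g)\<in>UNIV \<times> ({1..<i} \<rightarrow>\<^sub>E (UNIV::'a set)). h (g(0 := a)))"
  proof -
    have inj: "inj_on (\<lambda>(y, g). g(0 := y)) (UNIV \<times> ({1..<i} \<rightarrow>\<^sub>E (UNIV::'a set)))"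
      using inj_combinator[of 0 "{1..<i}" "\<lambda>_. UNIV::'a set"] by simp
    show ?thesis by (subst sum.reindex[OF inj]) (simp add: comp_def case_prod_unfold)
  qed
  also have "\<dots> = (\<Sum>a\<in>UNIV. \<Sum>g\<in>({1..<i} \<rightarrow>\<^sub>E (UNIV::'a set)). h (g(0 := a)))"
    by (rule sum.cartesian_product[symmetric])
  also have "\<dots> = (\<Sum>g\<in>({1..<i} \<rightarrow>\<^sub>E (UNIV::'a set)). \<Sum>a\<in>UNIV. h (g(0 := a)))"
    by (rule sum.swap)
  also have "\<dots> = (\<Sum>g\<in>({1..<i} \<rightarrow>\<^sub>E (UNIV::'a set)). \<Sum>a\<in>UNIV.
            inverse ((fls_const a * \<alpha> 0 + (\<Sum>j\<in>{1..<i}. fls_const (g j) * \<alpha> j)) + \<alpha> i) ^ m)"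
  proof (intro sum.cong refl)
    fix g :: "nat \<Rightarrow> 'a" and a :: 'a
    have "(\<Sum>j<i. fls_const ((g(0 := a)) j) * \<alpha> j) = fls_const a * \<alpha> 0 + (\<Sum>j\<in>{1..<i}. fls_const ((g(0 := a)) j) * \<alpha> j)"
      unfolding I by (subst sum.insert) auto
    also have "(\<Sum>j\<in>{1..<i}. fls_const ((g(0 := a)) j) * \<alpha> j) = (\<Sum>j\<in>{1..<i}. fls_const (g j) * \<alpha> j)"
      by (intro sum.cong) auto
    finally show "h (g(0 := a)) = inverse ((fls_const a * \<alpha> 0 + (\<Sum>j\<in>{1..<i}. fls_const (g j) * \<alpha> j)) + \<alpha> i) ^ m"
      unfolding h_def by simp
  qed
  finally show ?thesis .
qed

theorem lemma5:
  fixes f :: "'a::{finite,field} fls" and ap :: "'a poly" and b :: 'a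
    and \<alpha> :: "nat \<Rightarrow> 'a fls" and I :: "'a fls set" and d :: nat
  defines "q \<equiv> CARD('a)"
  assumes monic: "lead_coeff ap = 1" and deg: "degree ap = d" and d1: "d \<ge> 1"
    and b0: "b \<noteq> 0"
    and froot: "f ^ 2 - Tpoly ap * f - fls_const b = 0"
    and fnotk: "f \<notin> kfield"
    and fabs: "absinf f = real q ^ d"
    and ideal: "frac_ideal (Ainf1 f d) (Kfield f) I"
    and basis: "Fq_basis \<alpha> I" and alpha0: "\<alpha> 0 = 1"
    and incr: "strict_mono (\<lambda>i. absinf (\<alpha> i))"
  shows "\<forall>n::nat. n \<ge> 1 \<longrightarrow>
     Omega \<alpha> 1 (q ^ n - 1) =
        (\<alpha> 1 ^ (q ^ n) - \<alpha> 1) / (\<Prod>c\<in>(UNIV::'a set). fls_const c + \<alpha> 1 ^ (q ^ n))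
     \<and> absinf (Omega \<alpha> 1 (q ^ n - 1)) = absinf (\<alpha> 1) powr (real q ^ n * (1 - real q))
     \<and> (\<forall>i\<ge>1. absinf (Omega \<alpha> i (q ^ n - 1)) \<le> absinf (\<alpha> i) powr (real q ^ n * (1 - real q)))"
proof (intro allI impI)
  fix n :: nat assume n1: "n \<ge> 1"
  define Gf where "Gf = (\<lambda>z::'a fls. (z ^ (CARD('a) ^ n) - z) / (\<Prod>c\<in>UNIV. fls_const c + z ^ (CARD('a) ^ n)))"
  define w where "w = (\<lambda>i (g::nat \<Rightarrow> 'a). \<Sum>j\<in>{1..<i}. fls_const (g j) * \<alpha> j)"
  have a0abs: "absinf (\<alpha> 0) = 1" using alpha0 by (simp add: absinf_def)
  have agt: "\<alpha> i \<noteq> 0 \<and> fls_subdegree (\<alpha> i) < 0" if "i \<ge> 1" for i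
  proof -
    have "absinf (\<alpha> 0) < absinf (\<alpha> i)" using strict_monoD[OF incr, of 0 i] that by simp
    thus ?thesis using a0abs absinf_gt1 by simp
  qed
  have ajsd: "fls_subdegree (\<alpha> i) < fls_subdegree (\<alpha> j)" if "j < i" "1 \<le> j" for i j
  proof -
    have "absinf (\<alpha> j) < absinf (\<alpha> i)" using strict_monoD[OF incr, of j i] that by simp
    moreover have "\<alpha> j \<noteq> 0" "\<alpha> i \<noteq> 0" using agt that by auto
    ultimately show ?thesis using absinf_less_sd by blast
  qed
  have wsd: "fls_subdegree (w i g + \<alpha> i) = fls_subdegree (\<alpha> i) \<and> w i g + \<alpha> i \<noteq> 0" if "i \<ge> 1" for i g
  proof (rule sd_add_small)
    show "\<alpha> i \<noteq> 0" using agt that by simp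
    fix k assume k: "k \<le> fls_subdegree (\<alpha> i)"
    show "fls_nth (w i g) k = 0"
      unfolding w_def fls_nth_sum fls_mult_const_nth
    proof (intro sum.neutral ballI)
      fix j assume "j \<in> {1..<i}"
      hence "k < fls_subdegree (\<alpha> j)" using ajsd[of j i] k by auto
      thus "g j * fls_nth (\<alpha> j) k = 0" by simp
    qed
  qed
  have key: "Omega \<alpha> i (CARD('a) ^ n - 1) = (\<Sum>g\<in>({1..<i} \<rightarrow>\<^sub>E (UNIV::'a set)). Gf (w i g + \<alpha> i))"
    if i1: "i \<ge> 1" for i
  proof -
    have "Omega \<alpha> i (CARD('a) ^ n - 1) = (\<Sum>g\<in>({1..<i} \<rightarrow>\<^sub>E (UNIV::'a set)). \<Sum>a\<in>UNIV.
            inverse (fls_const a + (w i g + \<alpha> i)) ^ (CARD('a) ^ n - 1))"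
      unfolding Omega_split[OF i1] w_def alpha0 by (simp add: add.assoc)
    also have "\<dots> = (\<Sum>g\<in>({1..<i} \<rightarrow>\<^sub>E (UNIV::'a set)). Gf (w i g + \<alpha> i))"
    proof (intro sum.cong refl)
      fix g
      have "fls_subdegree (w i g + \<alpha> i) < 0" using wsd[OF i1] agt[OF i1] by simp
      thus "(\<Sum>a\<in>UNIV. inverse (fls_const a + (w i g + \<alpha> i)) ^ (CARD('a) ^ n - 1)) = Gf (w i g + \<alpha> i)"
        unfolding Gf_def by (intro G_eq sd_add_const(2))
    qed
    finally show ?thesis .
  qed
  have absG: "Gf (w i g + \<alpha> i) \<noteq> 0 \<and> absinf (Gf (w i g + \<alpha> i)) = absinf (\<alpha> i) powr (real CARD('a) ^ n * (1 - real CARD('a)))"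
    if i1: "i \<ge> 1" for i g
  proof -
    have s: "fls_subdegree (w i g + \<alpha> i) < 0" using wsd[OF i1] agt[OF i1] by simp
    have e: "absinf (w i g + \<alpha> i) = absinf (\<alpha> i)"
      using wsd[OF i1, of g] agt[OF i1] by (simp add: absinf_eq)
    show ?thesis using G_sd[OF s n1] absinf_G[OF s n1] e unfolding Gf_def by simp
  qed
  have w1: "w 1 g = 0" for g unfolding w_def by simp
  have O1: "Omega \<alpha> 1 (CARD('a) ^ n - 1) = Gf (\<alpha> 1)"
    using key[of 1] by (simp add: w_def)
  show "Omega \<alpha> 1 (q ^ n - 1) =
        (\<alpha> 1 ^ (q ^ n) - \<alpha> 1) / (\<Prod>c\<in>(UNIV::'a set). fls_const c + \<alpha> 1 ^ (q ^ n))
     \<and> absinf (Omega \<alpha> 1 (q ^ n - 1)) = absinf (\<alpha> 1) powr (real q ^ n * (1 - real q))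
     \<and> (\<forall>i\<ge>1. absinf (Omega \<alpha> i (q ^ n - 1)) \<le> absinf (\<alpha> i) powr (real q ^ n * (1 - real q)))"
  proof (intro conjI allI impI)
    show "Omega \<alpha> 1 (q ^ n - 1) =
        (\<alpha> 1 ^ (q ^ n) - \<alpha> 1) / (\<Prod>c\<in>(UNIV::'a set). fls_const c + \<alpha> 1 ^ (q ^ n))"
      unfolding q_def O1 Gf_def ..
    show "absinf (Omega \<alpha> 1 (q ^ n - 1)) = absinf (\<alpha> 1) powr (real q ^ n * (1 - real q))"
      unfolding q_def O1 using absG[of 1 "\<lambda>_. 0"] by (simp add: w_def)
    fix i :: nat assume i1: "i \<ge> 1"
    show "absinf (Omega \<alpha> i (q ^ n - 1)) \<le> absinf (\<alpha> i) powr (real q ^ n * (1 - real q))"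
      unfolding q_def key[OF i1] by (rule ultra) (use absG[OF i1] in \<open>auto intro: finite_PiE\<close>)
  qed
qed

end
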